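(* Let $n\geq 2$ and let $\mu_0^n$ be the complex commutative associative algebra with basis $\{e_1,\dots,e_n\}$ and multiplication $e_i\cdot e_j=e_{i+j}$ if $2\leq i+j\leq n$, all other products of basis elements being zero. Let $[-,-]$ be a bilinear operation on $\mu_0^n$ such that $(\mu_0^n,\cdot,[-,-])$ is a transposed Poisson algebra. Then there exist $\alpha_2,\dots,\alpha_n\in\mathbb{C}$ such that \[ [e_i,e_j]=(j-i)\sum_{t=i+j-1}^{n}\alpha_{t-i-j+3}\,e_t\quad\text{for } 3\leq i+j\leq n+1, \] and all other brackets of basis elements are zero. (This algebra is denoted $\mathbf{TP}(\alpha_2,\dots,\alpha_n)$.)
   Context: A transposed Poisson algebra is a triple $(\mathfrak{L},\cdot,[-,-])$ where $\mathfrak{L}$ is a complex vector space, $(\mathfrak{L},\cdot)$ is a commutative associative algebra, $(\mathfrak{L},[-,-])$ is a Lie algebra, and $2z\cdot[x,y]=[z\cdot x,y]+[x,z\cdot y]$ for all $x,y,z\in\mathfrak{L}$. *)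

theory Defs
  imports Main "HOL.Complex"
begin

text \<open>Elements of mu_0^n are coordinate vectors v :: nat => complex supported on {1..n};
  the basis vector e_i is the indicator of i.\<close>

definition mu0_carrier :: "nat \<Rightarrow> (nat \<Rightarrow> complex) set" where
  "mu0_carrier n = {v. \<forall>k. v k \<noteq> 0 \<longrightarrow> k \<in> {1..n}}"

definition ebasis :: "nat \<Rightarrow> nat \<Rightarrow> complex" where
  "ebasis i = (\<lambda>k. if k = i then 1 else 0)"

definition vadd :: "(nat \<Rightarrow> complex) \<Rightarrow> (nat \<Rightarrow> complex) \<Rightarrow> nat \<Rightarrow> complex" where
  "vadd x y = (\<lambda>k. x k + y k)"

definition vsmult :: "complex \<Rightarrow> (nat \<Rightarrow> complex) \<Rightarrow> nat \<Rightarrow> complex" where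
  "vsmult a x = (\<lambda>k. a * x k)"

definition vzero :: "nat \<Rightarrow> complex" where
  "vzero = (\<lambda>k. 0)"

text \<open>Multiplication of mu_0^n: e_i e_j = e_{i+j} if i+j <= n, else 0, extended bilinearly.\<close>
definition mu0_mult :: "nat \<Rightarrow> (nat \<Rightarrow> complex) \<Rightarrow> (nat \<Rightarrow> complex) \<Rightarrow> nat \<Rightarrow> complex" where
  "mu0_mult n x y = (\<lambda>t. if t \<in> {1..n} then (\<Sum>i=1..t-1. x i * y (t - i)) else 0)"

definition bilinear_on :: "(nat \<Rightarrow> complex) set \<Rightarrow>
    ((nat \<Rightarrow> complex) \<Rightarrow> (nat \<Rightarrow> complex) \<Rightarrow> nat \<Rightarrow> complex) \<Rightarrow> bool" where
  "bilinear_on V b \<longleftrightarrow>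
     (\<forall>x\<in>V. \<forall>y\<in>V. b x y \<in> V) \<and>
     (\<forall>a c x y z. x \<in> V \<longrightarrow> y \<in> V \<longrightarrow> z \<in> V \<longrightarrow>
        b (vadd (vsmult a x) (vsmult c y)) z = vadd (vsmult a (b x z)) (vsmult c (b y z)) \<and>
        b z (vadd (vsmult a x) (vsmult c y)) = vadd (vsmult a (b z x)) (vsmult c (b z y)))"

definition lie_on :: "(nat \<Rightarrow> complex) set \<Rightarrow>
    ((nat \<Rightarrow> complex) \<Rightarrow> (nat \<Rightarrow> complex) \<Rightarrow> nat \<Rightarrow> complex) \<Rightarrow> bool" where
  "lie_on V b \<longleftrightarrow> bilinear_on V b \<and>
     (\<forall>x\<in>V. b x x = vzero) \<and>
     (\<forall>x\<in>V. \<forall>y\<in>V. \<forall>z\<in>V.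
        vadd (vadd (b x (b y z)) (b y (b z x))) (b z (b x y)) = vzero)"

definition comm_assoc_on :: "(nat \<Rightarrow> complex) set \<Rightarrow>
    ((nat \<Rightarrow> complex) \<Rightarrow> (nat \<Rightarrow> complex) \<Rightarrow> nat \<Rightarrow> complex) \<Rightarrow> bool" where
  "comm_assoc_on V m \<longleftrightarrow> bilinear_on V m \<and>
     (\<forall>x\<in>V. \<forall>y\<in>V. m x y = m y x) \<and>
     (\<forall>x\<in>V. \<forall>y\<in>V. \<forall>z\<in>V. m (m x y) z = m x (m y z))"

definition transposed_poisson_on :: "(nat \<Rightarrow> complex) set \<Rightarrow>
    ((nat \<Rightarrow> complex) \<Rightarrow> (nat \<Rightarrow> complex) \<Rightarrow> nat \<Rightarrow> complex) \<Rightarrow>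
    ((nat \<Rightarrow> complex) \<Rightarrow> (nat \<Rightarrow> complex) \<Rightarrow> nat \<Rightarrow> complex) \<Rightarrow> bool" where
  "transposed_poisson_on V m b \<longleftrightarrow> comm_assoc_on V m \<and> lie_on V b \<and>
     (\<forall>x\<in>V. \<forall>y\<in>V. \<forall>z\<in>V.
        vsmult 2 (m z (b x y)) = vadd (b (m z x) y) (b x (m z y)))"

end

theory Submission
  imports Defs
begin

lemma L_mult:
  assumes "1 \<le> k"
  shows "mu0_mult n (ebasis k) w = (\<lambda>t. if k < t \<and> t \<le> n then w (t-k) else 0)"
proof
  fix t
  have "(\<Sum>i=1..t-1. ebasis k i * w (t - i)) = (\<Sum>i=1..t-1. if i = k then w (t-k) else 0)"
    by (rule sum.cong) (auto simp: ebasis_def)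
  also have "\<dots> = (if k \<in> {1..t-1} then w (t-k) else 0)" by simp
  finally show "mu0_mult n (ebasis k) w t = (if k < t \<and> t \<le> n then w (t-k) else 0)"
    using assms unfolding mu0_mult_def by auto
qed

lemma ebasis_mult:
  assumes "1 \<le> k" "1 \<le> i"
  shows "mu0_mult n (ebasis k) (ebasis i) = (if i + k \<le> n then ebasis (i+k) else vzero)"
  unfolding L_mult[OF assms(1)] using assms by (auto simp: ebasis_def vzero_def fun_eq_iff)

lemma sum_ebasis:
  assumes "finite A"
  shows "(\<Sum>s\<in>A. f s * ebasis s t) = (if t \<in> A then f t else 0)"
proof -
  have "(\<Sum>s\<in>A. f s * ebasis s t) = (\<Sum>s\<in>A. if s = t then f t else 0)"
    by (rule sum.cong) (auto simp: ebasis_def)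
  then show ?thesis using assms by simp
qed

definition Ff :: "nat \<Rightarrow> (nat \<Rightarrow> complex) \<Rightarrow> nat \<Rightarrow> nat \<Rightarrow> nat \<Rightarrow> complex" where
  "Ff n D i j t = (if i + j < t + 3 \<and> t \<le> n then of_int (int j - int i) * D (t + 3 - (i+j)) else 0)"

lemma Ff_R1:
  assumes "1 \<le> i" "1 \<le> j"
  shows "Ff n D (Suc i) j t = 2 * (if 1 < t \<and> t \<le> n then Ff n D i j (t-1) else 0) - Ff n D i (Suc j) t"
proof -
  consider "i + j < t + 2" "t \<le> n" | "\<not> (i + j < t + 2 \<and> t \<le> n)" by blast
  then show ?thesis
  proof cases
    case 1
    have a: "t + 3 - (Suc i + j) = t - 1 + 3 - (i+j)" "t + 3 - (i + Suc j) = t - 1 + 3 - (i+j)"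
      using 1 assms by auto
    show ?thesis
    proof (cases "i = 1 \<and> j = 1")
      case True then show ?thesis using 1 by (auto simp: Ff_def a algebra_simps)
    next
      case False
      then have "1 < t" using 1 assms by auto
      then show ?thesis using 1 assms by (auto simp: Ff_def a algebra_simps)
    qed
  next
    case 2 then show ?thesis by (auto simp: Ff_def)
  qed
qed

lemma Ff_R2:
  assumes "1 \<le> i" "1 \<le> j"
  shows "Ff n D i (j+2) t = 2 * (if 1 < t \<and> t \<le> n then Ff n D i (Suc j) (t-1) else 0)
     - (if 2 < t \<and> t \<le> n then Ff n D i j (t-2) else 0)"
proof -
  consider "i + j < t + 1" "t \<le> n" | "\<not> (i + j < t + 1 \<and> t \<le> n)" by blast
  then show ?thesis
  proof cases
    case 1
    have a: "t + 3 - (i + (j+2)) = t - 1 + 3 - (i+Suc j)" 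
       "t + 3 - (i + (j+2)) = t - 2 + 3 - (i+j)"
      using 1 assms by auto
    show ?thesis
    proof (cases "i = 1 \<and> j = 1")
      case True then show ?thesis using 1 by (auto simp: Ff_def a algebra_simps)
    next
      case False
      then have "2 < t" using 1 assms by auto
      then show ?thesis using 1 assms by (auto simp: Ff_def a algebra_simps)
    qed
  next
    case 2 then show ?thesis by (auto simp: Ff_def)
  qed
qed


theorem mainTheorem1:
  fixes n :: nat
    and br :: "(nat \<Rightarrow> complex) \<Rightarrow> (nat \<Rightarrow> complex) \<Rightarrow> nat \<Rightarrow> complex"
  assumes "n \<ge> 2"
    and "bilinear_on (mu0_carrier n) br"
    and "transposed_poisson_on (mu0_carrier n) (mu0_mult n) br"
  shows "\<exists>\<alpha> :: nat \<Rightarrow> complex. \<forall>i\<in>{1..n}. \<forall>j\<in>{1..n}.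
           br (ebasis i) (ebasis j) =
             (if 3 \<le> i + j \<and> i + j \<le> n + 1
              then (\<lambda>t. \<Sum>s\<in>{i+j-1..n}. (of_int (int j - int i) * \<alpha> (s + 3 - (i + j))) * ebasis s t)
              else vzero)"
proof -
  define V where "V = mu0_carrier n"
  have bil: "bilinear_on V br" using assms(2) V_def by simp
  have lie: "lie_on V br" and TP: "\<forall>x\<in>V. \<forall>y\<in>V. \<forall>z\<in>V.
        vsmult 2 (mu0_mult n z (br x y)) = vadd (br (mu0_mult n z x) y) (br x (mu0_mult n z y))"
    using assms(3) unfolding transposed_poisson_on_def V_def by auto
  have ebV: "ebasis i \<in> V" if "i \<in> {1..n}" for i
    using that by (auto simp: V_def mu0_carrier_def ebasis_def)
  have closed: "br x y \<in> V" if "x \<in> V" "y \<in> V" for x y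
    using bil that unfolding bilinear_on_def by auto
  have z0: "vadd (vsmult 0 z) (vsmult 0 z) = vzero" for z
    by (simp add: vadd_def vsmult_def vzero_def)
  have vzl: "br vzero z = vzero" if "z \<in> V" for z
  proof -
    have "br (vadd (vsmult 0 z) (vsmult 0 z)) z = vadd (vsmult 0 (br z z)) (vsmult 0 (br z z))"
      using bil that unfolding bilinear_on_def by blast
    then show ?thesis by (simp add: z0)
  qed
  have vzr: "br z vzero = vzero" if "z \<in> V" for z
  proof -
    have "br z (vadd (vsmult 0 z) (vsmult 0 z)) = vadd (vsmult 0 (br z z)) (vsmult 0 (br z z))"
      using bil that unfolding bilinear_on_def by blast
    then show ?thesis by (simp add: z0)
  qed
  have diag: "br x x = vzero" if "x \<in> V" for x
    using lie that unfolding lie_on_def by auto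
  define c where "c p q = (if p \<in> {1..n} \<and> q \<in> {1..n} then br (ebasis p) (ebasis q) else vzero)" for p q
  have c_supp: "c p q t = 0" if "t = 0 \<or> t > n" for p q t
  proof (cases "p \<in> {1..n} \<and> q \<in> {1..n}")
    case True
    then have "br (ebasis p) (ebasis q) \<in> V" using closed ebV by auto
    then show ?thesis using that True by (auto simp: c_def V_def mu0_carrier_def)
  qed (auto simp: c_def vzero_def)
  have E: "2 * (if k < t \<and> t \<le> n then c i j (t-k) else 0) = c (i+k) j t + c i (j+k) t"
    if "1 \<le> i" "1 \<le> j" "1 \<le> k" for i j k t
  proof (cases "i \<le> n \<and> j \<le> n \<and> k \<le> n")
    case True
    have "vsmult 2 (mu0_mult n (ebasis k) (br (ebasis i) (ebasis j))) =
       vadd (br (mu0_mult n (ebasis k) (ebasis i)) (ebasis j)) (br (ebasis i) (mu0_mult n (ebasis k) (ebasis j)))"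
      using TP ebV True that by auto
    then have h: "vsmult 2 (mu0_mult n (ebasis k) (br (ebasis i) (ebasis j))) t =
       vadd (br (mu0_mult n (ebasis k) (ebasis i)) (ebasis j)) (br (ebasis i) (mu0_mult n (ebasis k) (ebasis j))) t"
      by simp
    have a: "br (mu0_mult n (ebasis k) (ebasis i)) (ebasis j) = c (i+k) j"
      using True that by (auto simp: ebasis_mult c_def vzl ebV)
    have b: "br (ebasis i) (mu0_mult n (ebasis k) (ebasis j)) = c i (j+k)"
      using True that by (auto simp: ebasis_mult c_def vzr ebV)
    have d: "c i j = br (ebasis i) (ebasis j)" using True that by (auto simp: c_def)
    show ?thesis using h unfolding a b d by (simp add: L_mult[OF that(3)] vsmult_def vadd_def)
  next
    case False
    then show ?thesis using that by (auto simp: c_def vzero_def)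
  qed
  define D where "D = c 1 2"
  have R1: "c (Suc i) j t = 2 * (if 1 < t \<and> t \<le> n then c i j (t-1) else 0) - c i (Suc j) t"
    if "1 \<le> i" "1 \<le> j" for i j t
    using E[OF that, of 1 t] by (simp add: algebra_simps)
  have R2: "c i (j+2) t = 2 * (if 1 < t \<and> t \<le> n then c i (Suc j) (t-1) else 0)
     - (if 2 < t \<and> t \<le> n then c i j (t-2) else 0)"
    if "1 \<le> i" "1 \<le> j" for i j t
  proof -
    have e1: "2 * (if 2 < t \<and> t \<le> n then c i j (t-2) else 0) = c (i+2) j t + c i (j+2) t"
      using E[OF that, of 2 t] by simp
    have e2: "2 * (if 1 < t \<and> t \<le> n then c (Suc i) j (t-1) else 0) = c (i+2) j t + c (Suc i) (Suc j) t"
      using E[of "Suc i" j 1 t] that by simp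
    have e3: "2 * (if 1 < t-1 \<and> t-1 \<le> n then c i j (t-1-1) else 0) = c (Suc i) j (t-1) + c i (Suc j) (t-1)"
      using E[OF that, of 1 "t-1"] by simp
    have e4: "2 * (if 1 < t \<and> t \<le> n then c i (Suc j) (t-1) else 0) = c (Suc i) (Suc j) t + c i (j+2) t"
      using E[of i "Suc j" 1 t] that by simp
    consider "t = 0 \<or> t > n" | "t = 1" | "t = 2" "t \<le> n" | "2 < t" "t \<le> n" by linarith
    then show ?thesis
    proof cases
      case 1 then show ?thesis using c_supp by auto
    next
      case 2
      have "2 * c i (j+2) 1 = (c (i+2) j 1 + c i (j+2) 1) - (c (i+2) j 1 + c (Suc i) (Suc j) 1)
           + (c (Suc i) (Suc j) 1 + c i (j+2) 1)" by (simp add: algebra_simps)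
      also have "\<dots> = 0" using e1 e2 e4 2 by simp
      finally show ?thesis using 2 by simp
    next
      case 3
      have h3: "c (Suc i) j 1 + c i (Suc j) 1 = 0" using e3 3 by simp
      have h1: "c (i+2) j 2 + c i (j+2) 2 = 0" using e1 3 by simp
      have h2: "2 * c (Suc i) j 1 - c (i+2) j 2 - c (Suc i) (Suc j) 2 = 0" using e2 3 by simp
      have h4: "2 * c i (Suc j) 1 - c (Suc i) (Suc j) 2 - c i (j+2) 2 = 0" using e4 3 by simp
      have "2 * (c i (j+2) 2 - 2 * c i (Suc j) 1) = (c (i+2) j 2 + c i (j+2) 2)
          + (2 * c (Suc i) j 1 - c (i+2) j 2 - c (Suc i) (Suc j) 2)
          - 2 * (c (Suc i) j 1 + c i (Suc j) 1)
          - (2 * c i (Suc j) 1 - c (Suc i) (Suc j) 2 - c i (j+2) 2)" by (simp add: algebra_simps)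
      also have "\<dots> = 0" using h1 h2 h3 h4 by simp
      finally show ?thesis using 3 by simp
    next
      case 4
      have tt: "t - 1 - 1 = t - 2" by simp
      have h3: "2 * c i j (t-2) - c (Suc i) j (t-1) - c i (Suc j) (t-1) = 0" 
      proof -
        have "1 < t-1 \<and> t-1 \<le> n" using 4 by auto
        then have "2 * c i j (t-2) = c (Suc i) j (t-1) + c i (Suc j) (t-1)" using e3 tt by simp
        then show ?thesis by simp
      qed
      have h1: "2 * c i j (t-2) - c (i+2) j t - c i (j+2) t = 0" using e1 4 by simp
      have h2: "2 * c (Suc i) j (t-1) - c (i+2) j t - c (Suc i) (Suc j) t = 0" using e2 4 by simp
      have h4: "2 * c i (Suc j) (t-1) - c (Suc i) (Suc j) t - c i (j+2) t = 0" using e4 4 by simp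
      have "2 * (c i (j+2) t - 2 * c i (Suc j) (t-1) + c i j (t-2)) =
          - (2 * c i j (t-2) - c (i+2) j t - c i (j+2) t)
          + (2 * c (Suc i) j (t-1) - c (i+2) j t - c (Suc i) (Suc j) t)
          + 2 * (2 * c i j (t-2) - c (Suc i) j (t-1) - c i (Suc j) (t-1))
          - (2 * c i (Suc j) (t-1) - c (Suc i) (Suc j) t - c i (j+2) t)" by (simp add: algebra_simps)
      also have "\<dots> = 0" using h1 h2 h3 h4 by simp
      finally have g2: "2 * (c i (j+2) t - 2 * c i (Suc j) (t-1) + c i j (t-2)) = 0" .
      have g: "c i (j+2) t - 2 * c i (Suc j) (t-1) + c i j (t-2) = 0"
        using g2 by (metis mult_eq_0_iff zero_neq_numeral)
      have "c i (j+2) t = (c i (j+2) t - 2 * c i (Suc j) (t-1) + c i j (t-2)) + 2 * c i (Suc j) (t-1) - c i j (t-2)"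
        by simp
      also have "\<dots> = 2 * c i (Suc j) (t-1) - c i j (t-2)" using g by simp
      finally show ?thesis using 4 by simp
    qed
  qed
  have base1: "c 1 1 = Ff n D 1 1" using diag ebV assms(1)
    by (auto simp: c_def Ff_def fun_eq_iff vzero_def)
  have base2: "c 1 2 = Ff n D 1 2"
  proof
    fix t show "c 1 2 t = Ff n D 1 2 t"
      using c_supp[of t 1 2] by (cases "t = 0 \<or> t > n") (auto simp: Ff_def D_def)
  qed
  have P1: "c 1 j = Ff n D 1 j" if "1 \<le> j" for j
    using that
  proof (induction j rule: less_induct)
    case (less j)
    show ?case
    proof (cases "j \<le> 2")
      case True
      then have "j = 1 \<or> j = 2" using less.prems by auto
      then show ?thesis using base1 base2 by auto
    next
      case False
      then obtain m where m: "j = m + 2" "1 \<le> m" using that[of "j-2"] False by auto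
      have ih1: "c 1 m = Ff n D 1 m" using less.IH m by auto
      have ih2: "c 1 (Suc m) = Ff n D 1 (Suc m)" using less.IH m by auto
      show ?thesis unfolding m(1)
      proof
        fix t
        have "c 1 (m+2) t = 2 * (if 1 < t \<and> t \<le> n then c 1 (Suc m) (t-1) else 0)
           - (if 2 < t \<and> t \<le> n then c 1 m (t-2) else 0)" using R2[OF _ m(2)] by simp
        also have "\<dots> = 2 * (if 1 < t \<and> t \<le> n then Ff n D 1 (Suc m) (t-1) else 0)
           - (if 2 < t \<and> t \<le> n then Ff n D 1 m (t-2) else 0)" by (simp only: ih1 ih2)
        also have "\<dots> = Ff n D 1 (m+2) t" using Ff_R2[OF _ m(2)] by simp
        finally show "c 1 (m+2) t = Ff n D 1 (m+2) t" .
      qed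
    qed
  qed
  have P2: "\<forall>j\<ge>1. c i j = Ff n D i j" if "1 \<le> i" for i
    using that
  proof (induction i rule: dec_induct)
    case base then show ?case using P1 by auto
  next
    case (step i)
    show ?case
    proof (intro allI impI)
      fix j :: nat assume j: "1 \<le> j"
      have "c i j = Ff n D i j" "c i (Suc j) = Ff n D i (Suc j)" using step j by auto
      then show "c (Suc i) j = Ff n D (Suc i) j"
        by (intro ext) (simp only: R1[OF step(1) j] Ff_R1[OF step(1) j])
    qed
  qed
  have D1: "D 1 = 0"
  proof -
    have "c 1 (n+1) n = 0" by (simp add: c_def vzero_def)
    moreover have "c 1 (n+1) n = Ff n D 1 (n+1) n" using P1[of "n+1"] by simp
    moreover have "Ff n D 1 (n+1) n = of_nat n * D 1" using assms(1) by (simp add: Ff_def)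
    ultimately show ?thesis using assms(1) by simp
  qed
  show ?thesis
  proof (intro exI[of _ D] ballI)
    fix i j assume i: "i \<in> {1..n}" and j: "j \<in> {1..n}"
    have "br (ebasis i) (ebasis j) = Ff n D i j" using P2[of i] i j by (auto simp: c_def)
    moreover have "Ff n D i j t = (if 3 \<le> i + j \<and> i + j \<le> n + 1
              then (\<lambda>t. \<Sum>s\<in>{i+j-1..n}. (of_int (int j - int i) * D (s + 3 - (i + j))) * ebasis s t)
              else vzero) t" for t
    proof -
      have "t + 3 - (i + j) = 1 \<longleftrightarrow> t + 2 = i + j" if "i + j < t + 3" using that by auto
      then show ?thesis using i j D1 by (auto simp: sum_ebasis Ff_def vzero_def)
    qed
    ultimately show "br (ebasis i) (ebasis j) = (if 3 \<le> i + j \<and> i + j \<le> n + 1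
              then (\<lambda>t. \<Sum>s\<in>{i+j-1..n}. (of_int (int j - int i) * D (s + 3 - (i + j))) * ebasis s t)
              else vzero)" by auto
  qed
qed

end
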